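(* Let $P=\bigcup_{k=1}^{\infty}\{2^{2k-1},2^{2k-1}+1,\dots,2^{2k}-1\}$ and let $\Sigma_P=\{x\in\{0,1\}^{\mathbb{Z}_+}: x_i=x_j=1\Rightarrow |i-j|\in P\cup\{0\}\}$ with the shift $\sigma_P:\Sigma_P\to\Sigma_P$, $(\sigma_P x)_i=x_{i+1}$. Then $(\Sigma_P,\sigma_P)$ is $(2,3)$-transitive but not $(1,2)$-transitive, i.e. $(\Sigma_P\times\Sigma_P,\sigma_P^2\times\sigma_P^3)$ is transitive while $(\Sigma_P\times\Sigma_P,\sigma_P\times\sigma_P^2)$ is not.
   Context: $\mathbb{Z}_+=\{0,1,2,\dots\}$; $\{0,1\}^{\mathbb{Z}_+}$ carries the product topology. A dynamical system $(Y,g)$ ($Y$ compact metric, $g$ continuous) is transitive if for all non-empty open $U,V\subset Y$ there is $n\in\mathbb{N}$ with $U\cap g^{-n}(V)\ne\emptyset$. For $\mathbf{a}=(a_1,\dots,a_r)\in\mathbb{N}^r$, $(X,f)$ is $\mathbf{a}$-transitive if $(X^r,f^{a_1}\times\dots\times f^{a_r})$ is transitive. *)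

theory Defs
  imports "HOL-Analysis.Analysis"
begin

definition transitive_sys :: "'a topology \<Rightarrow> ('a \<Rightarrow> 'a) \<Rightarrow> bool" where
  "transitive_sys T g \<longleftrightarrow>
     (\<forall>U V. openin T U \<and> openin T V \<and> U \<noteq> {} \<and> V \<noteq> {} \<longrightarrow>
        (\<exists>n::nat. n \<ge> 1 \<and> U \<inter> {y \<in> topspace T. (g ^^ n) y \<in> V} \<noteq> {}))"

definition Pset :: "nat set" where
  "Pset = (\<Union>k\<in>{1..}. {2^(2*k-1) .. 2^(2*k) - 1})"

definition cantor_top :: "(nat \<Rightarrow> nat) topology" where
  "cantor_top = product_topology (\<lambda>_. discrete_topology {0,1}) UNIV"

definition SigmaP :: "(nat \<Rightarrow> nat) set" where
  "SigmaP = {x. (\<forall>i. x i \<in> {0,1}) \<and>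
      (\<forall>i j. x i = 1 \<and> x j = 1 \<longrightarrow> (max i j - min i j) \<in> Pset \<union> {0})}"

definition SigmaP_top :: "(nat \<Rightarrow> nat) topology" where
  "SigmaP_top = subtopology cantor_top SigmaP"

definition shift :: "(nat \<Rightarrow> nat) \<Rightarrow> (nat \<Rightarrow> nat)" where
  "shift x = (\<lambda>i. x (Suc i))"

end

theory Submission
  imports Defs
begin

lemma shift_pow: "(shift ^^ k) x = (\<lambda>i. x (i + k))"
  by (induction k arbitrary: x) (auto simp: shift_def)

lemma pair_pow: fixes f :: "'a \<Rightarrow> 'a" and h :: "'b \<Rightarrow> 'b"
  shows "((\<lambda>(x,y). (f x, h y)) ^^ n) (a,b) = ((f^^n) a, (h^^n) b)"
proof (induction n)
  case (Suc n)
  have "((\<lambda>(x,y). (f x, h y)) ^^ Suc n) (a,b) = (\<lambda>(x,y). (f x, h y)) (((\<lambda>(x,y). (f x, h y)) ^^ n) (a,b))"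
    by simp
  also have "\<dots> = ((f^^Suc n) a, (h^^Suc n) b)" using Suc by simp
  finally show ?case .
qed simp

lemma SigmaP_iff: "x \<in> SigmaP \<longleftrightarrow> (\<forall>i. x i \<in> {0,1}) \<and>
   (\<forall>i j. i < j \<and> x i = 1 \<and> x j = 1 \<longrightarrow> j - i \<in> Pset)"
proof
  assume "x \<in> SigmaP"
  then show "(\<forall>i. x i \<in> {0,1}) \<and> (\<forall>i j. i < j \<and> x i = 1 \<and> x j = 1 \<longrightarrow> j - i \<in> Pset)"
  proof (intro conjI allI impI)
    fix i show "x i \<in> {0,1}" using \<open>x \<in> SigmaP\<close> unfolding SigmaP_def by blast
  next
    fix i j assume ij: "i < j \<and> x i = 1 \<and> x j = 1"
    then have "max i j - min i j \<in> Pset \<union> {0}" using \<open>x \<in> SigmaP\<close> unfolding SigmaP_def by blast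
    moreover have "max i j - min i j = j - i" "j - i \<noteq> 0" using ij by auto
    ultimately show "j - i \<in> Pset" by auto
  qed
next
  assume A: "(\<forall>i. x i \<in> {0,1}) \<and> (\<forall>i j. i < j \<and> x i = 1 \<and> x j = 1 \<longrightarrow> j - i \<in> Pset)"
  show "x \<in> SigmaP" unfolding SigmaP_def
  proof (intro CollectI conjI allI impI)
    fix i j assume "x i = 1 \<and> x j = 1"
    then show "max i j - min i j \<in> Pset \<union> {0}"
      using A by (cases i j rule: linorder_cases) (auto simp: max_def min_def)
  qed (use A in auto)
qed

lemma shift_SigmaP: "x \<in> SigmaP \<Longrightarrow> (shift ^^ k) x \<in> SigmaP"
  unfolding SigmaP_iff shift_pow
  by (metis add_diff_cancel_right add_less_cancel_right)

lemma Pset_iff: "d \<in> Pset \<longleftrightarrow> (\<exists>k\<ge>1. 2^(2*k-1) \<le> d \<and> d \<le> 2^(2*k) - 1)"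
  unfolding Pset_def by auto

lemma not_both: assumes "n \<in> Pset" "2*n \<in> Pset" shows False
proof -
  obtain k where k: "k \<ge> 1" "2^(2*k-1) \<le> n" "n \<le> 2^(2*k) - 1" using assms(1) Pset_iff by blast
  obtain j where j: "j \<ge> 1" "2^(2*j-1) \<le> 2*n" "2*n \<le> 2^(2*j) - 1" using assms(2) Pset_iff by blast
  obtain k' where k': "k = Suc k'" using k(1) by (cases k) auto
  obtain j' where j': "j = Suc j'" using j(1) by (cases j) auto
  have e1: "(2::nat)^(2*k) = 2 * 2^(2*k-1)" using k' by simp
  have e2: "(2::nat)^(2*j) = 2 * 2^(2*j-1)" using j' by simp
  have lo: "2^(2*k) \<le> 2*n" using e1 k(2) by simp
  have pk: "(0::nat) < 2^(2*k)" by simp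
  have "n < 2^(2*k)" using k(3) pk by linarith
  then have hi: "2*n < 2 * 2^(2*k)" by simp
  show False
  proof (cases "j \<le> k")
    case True
    have "(2::nat)^(2*j) \<le> 2^(2*k)" using True by (intro power_increasing) auto
    moreover have "(0::nat) < 2^(2*j)" by simp
    ultimately show False using lo j(3) by linarith
  next
    case False
    have "(2::nat)^(2*k+1) \<le> 2^(2*j-1)" using False by (intro power_increasing) auto
    then show False using hi j(2) by simp
  qed
qed

lemma topspace_cantor: "topspace cantor_top = {x. \<forall>i. x i \<in> {0,1}}"
  unfolding cantor_top_def by (simp add: PiE_UNIV_domain Pi_def)

lemma topspace_SigmaP: "topspace SigmaP_top = SigmaP"
  unfolding SigmaP_top_def topspace_subtopology topspace_cantor SigmaP_def by auto

lemma nbhd: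
  assumes "openin SigmaP_top W" "z \<in> W"
  shows "\<exists>L. \<forall>x\<in>SigmaP. (\<forall>i<L. x i = z i) \<longrightarrow> x \<in> W"
proof -
  obtain T where T: "openin cantor_top T" "W = T \<inter> SigmaP"
    using assms(1) unfolding SigmaP_top_def openin_subtopology by blast
  have zT: "z \<in> T" using T assms(2) by blast
  have T1: "openin (product_topology (\<lambda>_. discrete_topology {0::nat,1}) UNIV) T"
    using T(1) unfolding cantor_top_def .
  have "\<exists>U. finite {i \<in> UNIV. U i \<noteq> topspace ((\<lambda>_. discrete_topology {0::nat,1}) i)} \<and>
          (\<forall>i \<in> UNIV. openin ((\<lambda>_. discrete_topology {0::nat,1}) i) (U i)) \<and>
          z \<in> Pi\<^sub>E UNIV U \<and> Pi\<^sub>E UNIV U \<subseteq> T"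
    using iffD1[OF openin_product_topology_alt T1] zT by (rule bspec)
  then obtain U where U: "finite {i \<in> UNIV. U i \<noteq> topspace ((\<lambda>_. discrete_topology {0::nat,1}) i)}"
     "z \<in> Pi\<^sub>E UNIV U" "Pi\<^sub>E UNIV U \<subseteq> T"
    by blast
  have F: "finite {i. U i \<noteq> {0,1}}" using U(1) by simp
  obtain L where L: "\<forall>i\<in>{i. U i \<noteq> {0,1}}. i < L"
    using F unfolding finite_nat_set_iff_bounded by blast
  show ?thesis
  proof (intro exI ballI impI)
    fix x assume x: "x \<in> SigmaP" "\<forall>i<L. x i = z i"
    have "\<forall>i. x i \<in> U i"
    proof
      fix i show "x i \<in> U i"
      proof (cases "i < L")
        case True
        then have "x i = z i" using x(2) by blast
        moreover have "z i \<in> U i" using U(2) by (simp add: PiE_UNIV_domain Pi_def)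
        ultimately show ?thesis by simp
      next
        case False then have "U i = {0,1}" using L by blast
        moreover have "x i \<in> {0,1}" using x(1) unfolding SigmaP_def by blast
        ultimately show ?thesis by simp
      qed
    qed
    then have "x \<in> Pi\<^sub>E UNIV U" by (simp add: PiE_UNIV_domain Pi_def)
    then show "x \<in> W" using U(3) T(2) x(1) by blast
  qed
qed

lemma nbhd2:
  assumes "openin (prod_topology SigmaP_top SigmaP_top) W" "(a,b) \<in> W"
  shows "\<exists>L. \<forall>x\<in>SigmaP. \<forall>y\<in>SigmaP. (\<forall>i<L. x i = a i \<and> y i = b i) \<longrightarrow> (x,y) \<in> W"
proof -
  obtain U V where UV: "openin SigmaP_top U" "openin SigmaP_top V" "a \<in> U" "b \<in> V" "U \<times> V \<subseteq> W"
    using iffD1[OF openin_prod_topology_alt assms(1), rule_format, OF assms(2)] by blast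
  obtain L1 where L1: "\<forall>x\<in>SigmaP. (\<forall>i<L1. x i = a i) \<longrightarrow> x \<in> U" using nbhd[OF UV(1,3)] by blast
  obtain L2 where L2: "\<forall>x\<in>SigmaP. (\<forall>i<L2. x i = b i) \<longrightarrow> x \<in> V" using nbhd[OF UV(2,4)] by blast
  show ?thesis
  proof (intro exI[of _ "max L1 L2"] ballI impI)
    fix x y assume xy: "x \<in> SigmaP" "y \<in> SigmaP" "\<forall>i<max L1 L2. x i = a i \<and> y i = b i"
    have "x \<in> U" using L1 xy by simp
    moreover have "y \<in> V" using L2 xy by simp
    ultimately show "(x,y) \<in> W" using UV(5) by blast
  qed
qed

lemma cyl_open: "openin SigmaP_top {x \<in> SigmaP. x 0 = 1}"
proof -
  have "openin cantor_top {x \<in> topspace cantor_top. x 0 \<in> {1}}"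
    unfolding cantor_top_def
    by (rule openin_continuous_map_preimage[OF continuous_map_product_projection]) auto
  moreover have "{x \<in> SigmaP. x 0 = 1} = {x \<in> topspace cantor_top. x 0 \<in> {1}} \<inter> SigmaP"
    using topspace_SigmaP unfolding SigmaP_top_def by auto
  ultimately show ?thesis unfolding SigmaP_top_def openin_subtopology by blast
qed

definition glue :: "(nat \<Rightarrow> nat) \<Rightarrow> (nat \<Rightarrow> nat) \<Rightarrow> nat \<Rightarrow> nat \<Rightarrow> nat \<Rightarrow> nat" where
  "glue p q s L = (\<lambda>i. if i < L then p i else if s \<le> i \<and> i < s + L then q (i - s) else 0)"

lemma glue_SigmaP:
  assumes p: "p \<in> SigmaP" and q: "q \<in> SigmaP" and Ls: "L \<le> s"
    and D: "\<And>d. s \<le> d + L \<Longrightarrow> d \<le> s + L \<Longrightarrow> d \<in> Pset"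
  shows "glue p q s L \<in> SigmaP"
  unfolding SigmaP_iff
proof (intro conjI allI impI)
  fix i show "glue p q s L i \<in> {0,1}" using p q unfolding SigmaP_iff glue_def by auto
next
  fix i j assume A: "i < j \<and> glue p q s L i = 1 \<and> glue p q s L j = 1"
  have pp: "\<And>i j. i < j \<Longrightarrow> p i = 1 \<Longrightarrow> p j = 1 \<Longrightarrow> j - i \<in> Pset" using p unfolding SigmaP_iff by blast
  have qq: "\<And>i j. i < j \<Longrightarrow> q i = 1 \<Longrightarrow> q j = 1 \<Longrightarrow> j - i \<in> Pset" using q unfolding SigmaP_iff by blast
  show "j - i \<in> Pset"
  proof (cases "j < L")
    case True then show ?thesis using A pp unfolding glue_def by auto
  next
    case jL: False
    have j: "s \<le> j" "j < s + L" "q (j - s) = 1" using A jL unfolding glue_def by (auto split: if_splits)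
    show ?thesis
    proof (cases "i < L")
      case True
      show ?thesis by (rule D) (use True j in auto)
    next
      case False
      have i: "s \<le> i" "q (i - s) = 1" using A False unfolding glue_def by (auto split: if_splits)
      have "(j - s) - (i - s) \<in> Pset" using qq[of "i - s" "j - s"] i j A by auto
      moreover have "(j - s) - (i - s) = j - i" using i j by auto
      ultimately show ?thesis by simp
    qed
  qed
qed

lemma Pset_block:
  assumes "8 * 4^j \<le> d" "d < 16 * (4::nat)^j"
  shows "d \<in> Pset"
proof -
  have e: "(4::nat)^j = 2^(2*j)" by (simp add: power_mult)
  have "2^(2*(j+2)-1) \<le> d" using assms(1) e by (simp add: power_add)
  moreover have "d \<le> 2^(2*(j+2)) - 1" using assms(2) e by (simp add: power_add)
  ultimately show ?thesis unfolding Pset_iff by (intro exI[of _ "j+2"]) auto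
qed


lemma part1: "transitive_sys (prod_topology SigmaP_top SigmaP_top)
            (\<lambda>(x, y). ((shift ^^ 2) x, (shift ^^ 3) y))"
  unfolding transitive_sys_def
proof (intro allI impI)
  fix U V assume H: "openin (prod_topology SigmaP_top SigmaP_top) U \<and>
      openin (prod_topology SigmaP_top SigmaP_top) V \<and> U \<noteq> {} \<and> V \<noteq> {}"
  obtain a b where ab: "(a,b) \<in> U" using H by auto
  obtain c d where cd: "(c,d) \<in> V" using H by auto
  have abS: "a \<in> SigmaP" "b \<in> SigmaP" using ab H openin_subset[of "prod_topology SigmaP_top SigmaP_top" U]
    by (auto simp: topspace_SigmaP)
  have cdS: "c \<in> SigmaP" "d \<in> SigmaP" using cd H openin_subset[of "prod_topology SigmaP_top SigmaP_top" V]
    by (auto simp: topspace_SigmaP)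
  obtain L1 where L1: "\<forall>x\<in>SigmaP. \<forall>y\<in>SigmaP. (\<forall>i<L1. x i = a i \<and> y i = b i) \<longrightarrow> (x,y) \<in> U"
    using nbhd2 H ab by blast
  obtain L2 where L2: "\<forall>x\<in>SigmaP. \<forall>y\<in>SigmaP. (\<forall>i<L2. x i = c i \<and> y i = d i) \<longrightarrow> (x,y) \<in> V"
    using nbhd2 H cd by blast
  define L where "L = max L1 L2"
  define N where "N = (4::nat)^L"
  have "L < 2^L" by (rule less_exp)
  also have "(2::nat)^L \<le> 4^L" by (rule power_mono) auto
  finally have LN: "L < N" unfolding N_def .
  define n where "n = 5 * N"
  define x where "x = glue a c (10*N) L"
  define y where "y = glue b d (15*N) L"
  have xS: "x \<in> SigmaP" unfolding x_def
  proof (rule glue_SigmaP[OF abS(1) cdS(1)])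
    show "L \<le> 10 * N" using LN by simp
    fix e assume "10 * N \<le> e + L" "e \<le> 10 * N + L"
    then show "e \<in> Pset" using LN by (intro Pset_block[of L]) (auto simp: N_def)
  qed
  have yS: "y \<in> SigmaP" unfolding y_def
  proof (rule glue_SigmaP[OF abS(2) cdS(2)])
    show "L \<le> 15 * N" using LN by simp
    fix e assume "15 * N \<le> e + L" "e \<le> 15 * N + L"
    then show "e \<in> Pset" using LN by (intro Pset_block[of L]) (auto simp: N_def)
  qed
  have inU: "(x,y) \<in> U"
  proof (rule L1[rule_format, OF xS yS])
    fix i assume "i < L1"
    then show "x i = a i \<and> y i = b i" unfolding x_def y_def glue_def L_def by auto
  qed
  have it: "((\<lambda>(x, y). ((shift ^^ 2) x, (shift ^^ 3) y)) ^^ n) (x,y)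
      = ((shift ^^ (2*n)) x, (shift ^^ (3*n)) y)"
    by (simp add: pair_pow funpow_mult)
  have inV: "((shift ^^ (2*n)) x, (shift ^^ (3*n)) y) \<in> V"
  proof -
    show ?thesis
    proof (rule L2[rule_format, OF shift_SigmaP[OF xS] shift_SigmaP[OF yS]])
      fix i assume i: "i < L2"
      then have "i < L" unfolding L_def by simp
      then show "(shift ^^ (2*n)) x i = c i \<and> (shift ^^ (3*n)) y i = d i"
        using LN unfolding shift_pow x_def y_def glue_def n_def by auto
    qed
  qed
  show "\<exists>n\<ge>1. U \<inter> {p \<in> topspace (prod_topology SigmaP_top SigmaP_top).
      ((\<lambda>(x, y). ((shift ^^ 2) x, (shift ^^ 3) y)) ^^ n) p \<in> V} \<noteq> {}"
  proof (intro exI conjI)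
    show "1 \<le> n" using LN unfolding n_def by simp
    show "U \<inter> {p \<in> topspace (prod_topology SigmaP_top SigmaP_top).
      ((\<lambda>(x, y). ((shift ^^ 2) x, (shift ^^ 3) y)) ^^ n) p \<in> V} \<noteq> {}"
      using inU inV it xS yS by (auto simp: topspace_SigmaP)
  qed
qed

lemma part2: "\<not> transitive_sys (prod_topology SigmaP_top SigmaP_top)
            (\<lambda>(x, y). ((shift ^^ 1) x, (shift ^^ 2) y))"
proof
  assume T: "transitive_sys (prod_topology SigmaP_top SigmaP_top)
            (\<lambda>(x, y). ((shift ^^ 1) x, (shift ^^ 2) y))"
  define C where "C = {x \<in> SigmaP. x 0 = 1}"
  have Co: "openin (prod_topology SigmaP_top SigmaP_top) (C \<times> C)"
    using cyl_open unfolding C_def openin_prod_Times_iff by blast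
  define e where "e = (\<lambda>i::nat. if i = 0 then 1 else (0::nat))"
  have "e \<in> C" unfolding C_def e_def SigmaP_iff by auto
  then have ne: "C \<times> C \<noteq> {}" by blast
  let ?g = "\<lambda>(x, y). ((shift ^^ 1) x, (shift ^^ 2) y)"
  have imp: "openin (prod_topology SigmaP_top SigmaP_top) (C \<times> C) \<and>
       openin (prod_topology SigmaP_top SigmaP_top) (C \<times> C) \<and> C \<times> C \<noteq> {} \<and> C \<times> C \<noteq> {} \<longrightarrow>
       (\<exists>n::nat. n \<ge> 1 \<and> (C \<times> C) \<inter> {p \<in> topspace (prod_topology SigmaP_top SigmaP_top).
         (?g ^^ n) p \<in> C \<times> C} \<noteq> {})"
    using T unfolding transitive_sys_def by (rule allE) (rule allE)
  have "\<exists>n::nat. n \<ge> 1 \<and> (C \<times> C) \<inter> {p \<in> topspace (prod_topology SigmaP_top SigmaP_top).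
         (?g ^^ n) p \<in> C \<times> C} \<noteq> {}"
    by (rule mp[OF imp]) (intro conjI Co ne)
  then obtain n where nn: "n \<ge> 1 \<and> (C \<times> C) \<inter> {p \<in> topspace (prod_topology SigmaP_top SigmaP_top).
         (?g ^^ n) p \<in> C \<times> C} \<noteq> {}" ..
  have n: "n \<ge> 1" using nn by (rule conjunct1)
  have ne2: "(C \<times> C) \<inter> {p \<in> topspace (prod_topology SigmaP_top SigmaP_top).
         (?g ^^ n) p \<in> C \<times> C} \<noteq> {}" using nn by (rule conjunct2)
  from ne2 obtain p where "p \<in> (C \<times> C) \<inter> {p \<in> topspace (prod_topology SigmaP_top SigmaP_top).
         (?g ^^ n) p \<in> C \<times> C}" by (meson equals0I)
  then have p1: "p \<in> C \<times> C" and p2: "(?g ^^ n) p \<in> C \<times> C" by auto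
  obtain x y where pxy: "p = (x,y)" by (cases p)
  have xC: "x \<in> C" and yC: "y \<in> C" using p1 pxy by auto
  have "((shift ^^ (1*n)) x, (shift ^^ (2*n)) y) \<in> C \<times> C"
    using p2 unfolding pxy pair_pow funpow_mult .
  then have "(shift ^^ (1*n)) x \<in> C" "(shift ^^ (2*n)) y \<in> C" by auto
  then have h: "x n = 1" "y (2*n) = 1" unfolding C_def shift_pow by auto
  have x1: "x \<in> SigmaP" "x 0 = 1" using xC unfolding C_def by auto
  have y1: "y \<in> SigmaP" "y 0 = 1" using yC unfolding C_def by auto
  have xx: "\<And>i j. i < j \<Longrightarrow> x i = 1 \<Longrightarrow> x j = 1 \<Longrightarrow> j - i \<in> Pset"
    using x1(1) unfolding SigmaP_iff by blast
  have yy: "\<And>i j. i < j \<Longrightarrow> y i = 1 \<Longrightarrow> y j = 1 \<Longrightarrow> j - i \<in> Pset"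
    using y1(1) unfolding SigmaP_iff by blast
  have "n - 0 \<in> Pset" using xx[of 0 n] x1(2) h(1) n by simp
  moreover have "2*n - 0 \<in> Pset" using yy[of 0 "2*n"] y1(2) h(2) n by simp
  ultimately show False using not_both by simp
qed

theorem mainTheorem6:
  shows "transitive_sys (prod_topology SigmaP_top SigmaP_top)
            (\<lambda>(x, y). ((shift ^^ 2) x, (shift ^^ 3) y))
       \<and> \<not> transitive_sys (prod_topology SigmaP_top SigmaP_top)
            (\<lambda>(x, y). ((shift ^^ 1) x, (shift ^^ 2) y))"
  using part1 part2 by blast

end
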